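(* Let $\gamma_\infty=\lim_{\epsilon\to+\infty}\gamma(\epsilon)=E\{Z_i\mid A_i=0,Y_i=1\}-E\{Z_i\mid A_i=1,Y_i=1\}$. If $\gamma_\infty\neq 0$ (i.e. the non-private algorithm $\mathscr{A}$ is not $0$-fair), then there exists $\hat\epsilon\in(0,+\infty)$ such that $|\gamma(\epsilon)|<|\gamma_\infty|$ for all $\epsilon\in(0,\hat\epsilon)$.
   Context: There are $n$ individuals indexed by $\mathcal{N}=\{1,\dots,n\}$. Individual $i$ is described by a random tuple $(X_i,A_i,Y_i)$, with features $X_i\in\mathcal{X}$, protected attribute $A_i\in\{0,1\}$ and qualification state $Y_i\in\{0,1\}$; the tuples are i.i.d. with a common distribution $\mathsf{F}$. A fixed function $r:\mathcal{X}\to\mathcal{R}$ is given, with $\mathcal{R}\subset[0,1]$ finite, and $R_i=r(X_i)$. Conditioning events $\{A_i=a,Y_i=1\}$ are assumed to have positive probability. For $\epsilon\ge0$, define $Z_{i,\epsilon}=\exp(\epsilon R_i/2)/\sum_{j=1}^n\exp(\epsilon R_j/2)$ (the probability that the exponential mechanism $\mathscr{A}_\epsilon$ selects $i$, given the scores) and $\gamma(\epsilon)=E\{Z_{i,\epsilon}\mid A_i=0,Y_i=1\}-E\{Z_{i,\epsilon}\mid A_i=1,Y_i=1\}$. Let $N_{\max}=|\{i: R_i=\max_j R_j\}|$ and $Z_i=0$ if $R_i\neq\max_jR_j$, $Z_i=1/N_{\max}$ otherwise; $E\{Z_i\}$ is the probability that the algorithm $\mathscr{A}$ selecting uniformly among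 individuals with the highest score selects $i$. The limit $\lim_{\epsilon\to+\infty}\gamma(\epsilon)$ exists and equals the stated difference of conditional expectations of $Z_i$. *)

theory Defs
  imports "HOL-Probability.Probability"
begin

text \<open>An individual is a triple (x, a, y) :: 'x \<times> bool \<times> bool, where the protected
attribute A and the qualification state Y in {0,1} are encoded as booleans
(True = 1, False = 0).\<close>

definition sample :: "nat \<Rightarrow> ('x \<times> bool \<times> bool) measure \<Rightarrow> (nat \<Rightarrow> 'x \<times> bool \<times> bool) measure" where
  "sample n F = PiM {1..n} (\<lambda>_. F)"

definition score :: "('x \<Rightarrow> real) \<Rightarrow> (nat \<Rightarrow> 'x \<times> bool \<times> bool) \<Rightarrow> nat \<Rightarrow> real" where
  "score r \<omega> j = r (fst (\<omega> j))"

definition Zexp :: "('x \<Rightarrow> real) \<Rightarrow> nat \<Rightarrow> real \<Rightarrow> nat \<Rightarrow> (nat \<Rightarrow> 'x \<times> bool \<times> bool) \<Rightarrow> real" where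
  "Zexp r n \<epsilon> i \<omega> = exp (\<epsilon> * score r \<omega> i / 2) / (\<Sum>j\<in>{1..n}. exp (\<epsilon> * score r \<omega> j / 2))"

definition Zmax :: "('x \<Rightarrow> real) \<Rightarrow> nat \<Rightarrow> nat \<Rightarrow> (nat \<Rightarrow> 'x \<times> bool \<times> bool) \<Rightarrow> real" where
  "Zmax r n i \<omega> =
     (let m = Max ((\<lambda>j. score r \<omega> j) ` {1..n});
          Nmax = card {j\<in>{1..n}. score r \<omega> j = m}
      in if score r \<omega> i = m then 1 / real Nmax else 0)"

definition grp_event :: "nat \<Rightarrow> ('x \<times> bool \<times> bool) measure \<Rightarrow> nat \<Rightarrow> bool \<Rightarrow> (nat \<Rightarrow> 'x \<times> bool \<times> bool) set" where
  "grp_event n F i a = {\<omega> \<in> space (sample n F). fst (snd (\<omega> i)) = a \<and> snd (snd (\<omega> i)) = True}"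

definition cond_expect :: "'a measure \<Rightarrow> ('a \<Rightarrow> real) \<Rightarrow> 'a set \<Rightarrow> real" where
  "cond_expect M f B = (\<integral>\<omega>. f \<omega> * indicator B \<omega> \<partial>M) / measure M B"

definition gamma :: "('x \<Rightarrow> real) \<Rightarrow> ('x \<times> bool \<times> bool) measure \<Rightarrow> nat \<Rightarrow> nat \<Rightarrow> real \<Rightarrow> real" where
  "gamma r F n i \<epsilon> =
     cond_expect (sample n F) (Zexp r n \<epsilon> i) (grp_event n F i False)
   - cond_expect (sample n F) (Zexp r n \<epsilon> i) (grp_event n F i True)"

definition gamma_inf :: "('x \<Rightarrow> real) \<Rightarrow> ('x \<times> bool \<times> bool) measure \<Rightarrow> nat \<Rightarrow> nat \<Rightarrow> real" where
  "gamma_inf r F n i =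
     cond_expect (sample n F) (Zmax r n i) (grp_event n F i False)
   - cond_expect (sample n F) (Zmax r n i) (grp_event n F i True)"

end

theory Submission
  imports Defs
begin

lemma ce_bounds:
  assumes fm: "finite_measure M" and f: "f \<in> borel_measurable M" and B: "B \<in> sets M"
    and Bp: "measure M B > 0" and bd: "\<And>\<omega>. \<omega> \<in> space M \<Longrightarrow> L \<le> f \<omega> \<and> f \<omega> \<le> U"
  shows "L \<le> cond_expect M f B \<and> cond_expect M f B \<le> U"
proof -
  interpret finite_measure M by fact
  have int: "integrable M (\<lambda>\<omega>. f \<omega> * indicator B \<omega>)"
    by (rule integrable_const_bound[where B="\<bar>L\<bar> + \<bar>U\<bar>"])
       (use f B bd in \<open>auto simp: indicator_def intro!: AE_I2 split: if_splits\<close>, fastforce+)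
  have intc: "integrable M (\<lambda>\<omega>. c * indicator B \<omega>)" for c :: real
    using B by (intro integrable_mult_right) (auto simp: emeasure_eq_measure)
  have ic: "(\<integral>\<omega>. c * indicator B \<omega> \<partial>M) = c * measure M B" for c :: real
    using B by (simp add: emeasure_eq_measure)
  have lo: "(\<integral>\<omega>. L * indicator B \<omega> \<partial>M) \<le> (\<integral>\<omega>. f \<omega> * indicator B \<omega> \<partial>M)"
    using bd by (intro integral_mono[OF intc int]) (auto simp: indicator_def)
  have hi: "(\<integral>\<omega>. f \<omega> * indicator B \<omega> \<partial>M) \<le> (\<integral>\<omega>. U * indicator B \<omega> \<partial>M)"
    using bd by (intro integral_mono[OF int intc]) (auto simp: indicator_def)
  show ?thesis using lo hi Bp unfolding cond_expect_def ic
    by (simp add: field_simps)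
qed

theorem theorem3:
  fixes F :: "('x \<times> bool \<times> bool) measure"
    and r :: "'x \<Rightarrow> real"
    and n i :: nat
  assumes F_prob: "prob_space F"
    and r_meas: "(\<lambda>t. r (fst t)) \<in> borel_measurable F"
    and A_meas: "(\<lambda>t. fst (snd t)) \<in> F \<rightarrow>\<^sub>M count_space UNIV"
    and Y_meas: "(\<lambda>t. snd (snd t)) \<in> F \<rightarrow>\<^sub>M count_space UNIV"
    and r_fin: "finite (range r)"
    and r_range: "range r \<subseteq> {0..1}"
    and i_in: "i \<in> {1..n}"
    and pos: "\<And>a. measure F {t \<in> space F. fst (snd t) = a \<and> snd (snd t) = True} > 0"
    and nonfair: "gamma_inf r F n i \<noteq> 0"
  shows "\<exists>\<epsilon>h>0. \<forall>\<epsilon>\<in>{0<..<\<epsilon>h}. \<bar>gamma r F n i \<epsilon>\<bar> < \<bar>gamma_inf r F n i\<bar>"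
proof -
  define g where "g = \<bar>gamma_inf r F n i\<bar>"
  have gpos: "g > 0" using nonfair by (simp add: g_def)
  let ?M = "sample n F"
  have psM: "prob_space ?M" unfolding sample_def
    by (intro prob_space_PiM F_prob)
  then interpret P: prob_space ?M .
  have n1: "n \<ge> 1" using i_in by simp
  have sc_meas: "(\<lambda>\<omega>. score r \<omega> j) \<in> borel_measurable ?M" if "j \<in> {1..n}" for j
    unfolding score_def sample_def
    using measurable_compose[OF measurable_component_singleton[of j "{1..n}" "\<lambda>_. F"] r_meas] that by simp
  have sc_bd: "0 \<le> score r \<omega> j \<and> score r \<omega> j \<le> 1" for \<omega> j
    using subsetD[OF r_range, of "r (fst (\<omega> j))"] unfolding score_def by auto
  define S where "S a = {t \<in> space F. fst (snd t) = a \<and> snd (snd t) = True}" for a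
  have S_sets: "S a \<in> sets F" for a
  proof -
    have "S a = ((\<lambda>t. fst (snd t)) -` {a} \<inter> space F) \<inter> ((\<lambda>t. snd (snd t)) -` {True} \<inter> space F)"
      unfolding S_def by auto
    also have "\<dots> \<in> sets F"
      using measurable_sets[OF A_meas, of "{a}"] measurable_sets[OF Y_meas, of "{True}"] by auto
    finally show ?thesis .
  qed
  have ev_eq: "grp_event n F i a = (\<lambda>\<omega>. \<omega> i) -` S a \<inter> space ?M" for a
  proof -
    have "\<omega> i \<in> space F" if "\<omega> \<in> space ?M" for \<omega>
      using that i_in unfolding sample_def by (auto simp: space_PiM)
    then show ?thesis unfolding grp_event_def S_def by auto
  qed
  have distr_eq: "distr ?M F (\<lambda>\<omega>. \<omega> i) = F"
    unfolding sample_def by (rule distr_PiM_component) (use F_prob i_in in auto)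
  have comp_meas: "(\<lambda>\<omega>. \<omega> i) \<in> measurable ?M F"
    unfolding sample_def by (rule measurable_component_singleton) (use i_in in simp)
  have ev_sets: "grp_event n F i a \<in> sets ?M" for a
    unfolding ev_eq using measurable_sets[OF comp_meas S_sets] .
  have ev_pos: "measure ?M (grp_event n F i a) > 0" for a
  proof -
    have "measure ?M (grp_event n F i a) = measure (distr ?M F (\<lambda>\<omega>. \<omega> i)) (S a)"
      unfolding ev_eq by (subst measure_distr[OF comp_meas]) (auto simp: S_sets)
    also have "\<dots> = measure F (S a)" using distr_eq by simp
    finally show ?thesis using pos[of a] unfolding S_def by simp
  qed
  have Z_meas: "Zexp r n \<epsilon> i \<in> borel_measurable ?M" for \<epsilon>
    unfolding Zexp_def using sc_meas i_in by measurable
  have Z_bd: "1 / (n * exp (\<epsilon>/2)) \<le> Zexp r n \<epsilon> i \<omega> \<and> Zexp r n \<epsilon> i \<omega> \<le> exp (\<epsilon>/2) / n"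
    if "\<epsilon> \<ge> 0" for \<epsilon> \<omega>
  proof -
    have e: "1 \<le> exp (\<epsilon> * score r \<omega> j / 2) \<and> exp (\<epsilon> * score r \<omega> j / 2) \<le> exp (\<epsilon>/2)" for j
      using sc_bd[of \<omega> j] that by (auto simp: mult_left_le)
    have s1: "real n \<le> (\<Sum>j\<in>{1..n}. exp (\<epsilon> * score r \<omega> j / 2))"
      using sum_mono[of "{1..n}" "\<lambda>_. 1::real" "\<lambda>j. exp (\<epsilon> * score r \<omega> j / 2)"] e by simp
    have s2: "(\<Sum>j\<in>{1..n}. exp (\<epsilon> * score r \<omega> j / 2)) \<le> n * exp (\<epsilon>/2)"
      using sum_mono[of "{1..n}" "\<lambda>j. exp (\<epsilon> * score r \<omega> j / 2)" "\<lambda>_. exp (\<epsilon>/2)"] e by simp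
    have np: "real n > 0" using n1 by simp
    have "1 / (n * exp (\<epsilon>/2)) \<le> exp (\<epsilon> * score r \<omega> i / 2) / (n * exp (\<epsilon>/2))"
      using e[of i] np by (intro divide_right_mono) auto
    also have "\<dots> \<le> Zexp r n \<epsilon> i \<omega>" unfolding Zexp_def
      using s1 s2 np by (intro divide_left_mono) auto
    finally have A: "1 / (n * exp (\<epsilon>/2)) \<le> Zexp r n \<epsilon> i \<omega>" .
    have "Zexp r n \<epsilon> i \<omega> \<le> exp (\<epsilon> * score r \<omega> i / 2) / n" unfolding Zexp_def
      using s1 np by (intro divide_left_mono) auto
    also have "\<dots> \<le> exp (\<epsilon>/2) / n" using e[of i] np by (intro divide_right_mono) auto
    finally show ?thesis using A by simp
  qed
  define eh where "eh = 2 * ln (1 + g/2)"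
  have ehpos: "eh > 0" unfolding eh_def using gpos by simp
  show ?thesis
  proof (intro exI[of _ eh] conjI ehpos ballI)
    fix \<epsilon> assume "\<epsilon> \<in> {0<..<eh}"
    hence e0: "\<epsilon> > 0" and e1: "\<epsilon> < eh" by auto
    define u where "u = exp (\<epsilon>/2)"
    have u1: "u \<ge> 1" unfolding u_def using e0 by simp
    have u2: "u < 1 + g/2" unfolding u_def
    proof -
      have "exp (\<epsilon>/2) < exp (eh/2)" using e1 by simp
      also have "\<dots> = 1 + g/2" unfolding eh_def using gpos by simp
      finally show "exp (\<epsilon>/2) < 1 + g/2" .
    qed
    have b: "1 / (n * u) \<le> cond_expect ?M (Zexp r n \<epsilon> i) (grp_event n F i a) \<and>
             cond_expect ?M (Zexp r n \<epsilon> i) (grp_event n F i a) \<le> u / n" for a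
      unfolding u_def
      by (rule ce_bounds[OF P.finite_measure_axioms Z_meas ev_sets ev_pos]) (use Z_bd e0 in auto)
    have "\<bar>gamma r F n i \<epsilon>\<bar> \<le> u / n - 1 / (n * u)"
      unfolding gamma_def using b[of False] b[of True] by linarith
    also have "\<dots> = (u - 1/u) / n" using u1 n1 by (simp add: diff_divide_distrib mult.commute)
    also have "\<dots> \<le> u - 1/u"
    proof -
      have "1/u \<le> 1" using u1 by simp
      hence x0: "u - 1/u \<ge> 0" using u1 by linarith
      have "(u - 1/u) / real n \<le> (u - 1/u) / 1"
        using n1 x0 by (intro divide_left_mono) auto
      then show ?thesis by simp
    qed
    also have "\<dots> \<le> 2 * (u - 1)"
    proof -
      have sq: "0 \<le> (u - 1) * (u - 1)" by simp
      have "(2 - u) * u \<le> 1" using sq by (simp add: algebra_simps)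
      hence "2 - u \<le> 1/u" using u1 by (simp add: le_divide_eq)
      hence "1 - 1/u \<le> u - 1" by linarith
      then show ?thesis by simp
    qed
    also have "\<dots> < g" using u2 by simp
    finally show "\<bar>gamma r F n i \<epsilon>\<bar> < \<bar>gamma_inf r F n i\<bar>" unfolding g_def .
  qed
qed

end
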